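(* Let $\{a,b\}$ be a $2$-element generating set of a finite abelian group $G$, and let $P$ and $P'$ be spanning quasi-paths in $\mathrm{Cay}(G;a,b)$ such that $\delta_b(P)=\delta_b(P')$. If $P$ is a hamiltonian path, then $P'$ is also a hamiltonian path.
   Context: The Cayley digraph $\mathrm{Cay}(G;a,b)$ has vertex set $G$ and an arc from $v$ to $v+s$ for all $v\in G$, $s\in\{a,b\}$; such an arc is an $s$-edge, and $\delta_b(P)$ denotes the number of $b$-edges in a subdigraph $P$. A spanning quasi-path in a digraph is a spanning subdigraph such that exactly one connected component is a directed path and all other components are directed cycles. A hamiltonian path is a directed path visiting every vertex exactly once. *)

theory Defs
  imports Main
begin

inductive_set subgroup_gen :: "'g::ab_group_add set \<Rightarrow> 'g set" for S where
  zero: "0 \<in> subgroup_gen S"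
| gen: "s \<in> S \<Longrightarrow> s \<in> subgroup_gen S"
| add: "x \<in> subgroup_gen S \<Longrightarrow> y \<in> subgroup_gen S \<Longrightarrow> x + y \<in> subgroup_gen S"
| neg: "x \<in> subgroup_gen S \<Longrightarrow> - x \<in> subgroup_gen S"

definition generates :: "'g::ab_group_add set \<Rightarrow> bool" where
  "generates S \<longleftrightarrow> subgroup_gen S = UNIV"

text \<open>Arcs of Cay(G;a,b): from v to v+s with s in {a,b}. A subdigraph is a set of arcs.\<close>
definition cay_arcs :: "'g::ab_group_add \<Rightarrow> 'g \<Rightarrow> ('g \<times> 'g) set" where
  "cay_arcs a b = {(v, w). w = v + a \<or> w = v + b}"

definition delta_b :: "'g::ab_group_add \<Rightarrow> ('g \<times> 'g) set \<Rightarrow> nat" where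
  "delta_b b P = card {(v, w) \<in> P. w = v + b}"

definition path_arcs :: "'a list \<Rightarrow> ('a \<times> 'a) set" where
  "path_arcs xs = set (zip xs (tl xs))"

definition cycle_arcs :: "'a list \<Rightarrow> ('a \<times> 'a) set" where
  "cycle_arcs xs = set (zip xs (tl xs @ [hd xs]))"

definition is_dipath :: "'g::ab_group_add \<Rightarrow> 'g \<Rightarrow> 'g list \<Rightarrow> bool" where
  "is_dipath a b xs \<longleftrightarrow> xs \<noteq> [] \<and> distinct xs \<and> path_arcs xs \<subseteq> cay_arcs a b"

definition is_dicycle :: "'g::ab_group_add \<Rightarrow> 'g \<Rightarrow> 'g list \<Rightarrow> bool" where
  "is_dicycle a b xs \<longleftrightarrow> xs \<noteq> [] \<and> distinct xs \<and> cycle_arcs xs \<subseteq> cay_arcs a b"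

definition spanning_quasi_path :: "'g::ab_group_add \<Rightarrow> 'g \<Rightarrow> ('g \<times> 'g) set \<Rightarrow> bool" where
  "spanning_quasi_path a b P \<longleftrightarrow>
     (\<exists>p C. is_dipath a b p \<and> (\<forall>c\<in>C. is_dicycle a b c)
        \<and> (\<forall>c\<in>C. set c \<inter> set p = {})
        \<and> (\<forall>c\<in>C. \<forall>c'\<in>C. c \<noteq> c' \<longrightarrow> set c \<inter> set c' = {})
        \<and> set p \<union> (\<Union>c\<in>C. set c) = UNIV
        \<and> P = path_arcs p \<union> (\<Union>c\<in>C. cycle_arcs c))"

definition hamiltonian_path :: "'g::ab_group_add \<Rightarrow> 'g \<Rightarrow> ('g \<times> 'g) set \<Rightarrow> bool" where
  "hamiltonian_path a b P \<longleftrightarrow> (\<exists>p. is_dipath a b p \<and> set p = UNIV \<and> P = path_arcs p)"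

end

theory Submission imports Defs begin

fun mul :: "nat \<Rightarrow> 'g::ab_group_add \<Rightarrow> 'g" where
  "mul 0 x = 0" | "mul (Suc n) x = x + mul n x"

lemma mul_add: "mul (m+n) x = mul m x + mul n x"
  by (induction m) (auto simp: add.assoc)

lemma mul_mult: "mul (m*n) x = mul m (mul n x)"
  by (induction m) (auto simp: mul_add)

lemma mul_distrib: "mul n (x+y) = mul n x + mul n y"
  by (induction n) (auto simp: algebra_simps)

lemma mul_neg: "mul n (-x) = - mul n x"
  by (induction n) (auto simp: algebra_simps)

lemma mul_diff: "mul n (x-y) = mul n x - mul n y"
  by (metis diff_conv_add_uminus mul_distrib mul_neg)

lemma sum_const_mul: "finite A \<Longrightarrow> (\<Sum>v\<in>A. x) = mul (card A) x"
  by (induction rule: finite_induct) auto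

lemma mul_card: "mul (card (UNIV::'g set)) (x::'g::{ab_group_add,finite}) = 0"
proof -
  have "(\<Sum>v\<in>UNIV. v + x) = (\<Sum>v\<in>UNIV. (v::'g))"
  proof -
    have "inj (\<lambda>v. v + x)" by (simp add: inj_def)
    moreover have "range (\<lambda>v. v + x) = UNIV"
      by (metis diff_add_cancel surj_def)
    ultimately show ?thesis
      using sum.reindex[of "\<lambda>v. v + x" UNIV "\<lambda>v. v"] by simp
  qed
  then have "(\<Sum>v\<in>(UNIV::'g set). x) = 0" by (simp add: sum.distrib)
  moreover have "(\<Sum>v\<in>(UNIV::'g set). x) = mul (card (UNIV::'g set)) x"
    by (rule sum_const_mul) simp
  ultimately show ?thesis by simp
qed

lemma path_arcs_iff:
  "(v,w) \<in> path_arcs xs \<longleftrightarrow> (\<exists>i. Suc i < length xs \<and> v = xs!i \<and> w = xs!Suc i)"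
proof
  assume "(v,w) \<in> path_arcs xs"
  then obtain n where "xs!n = v" "tl xs ! n = w" "n < length xs" "n < length (tl xs)"
    unfolding path_arcs_def in_set_zip by auto
  then show "\<exists>i. Suc i < length xs \<and> v = xs!i \<and> w = xs!Suc i"
    by (intro exI[of _ n]) (auto simp: nth_tl)
next
  assume "\<exists>i. Suc i < length xs \<and> v = xs!i \<and> w = xs!Suc i"
  then obtain i where "Suc i < length xs" "v = xs!i" "w = xs!Suc i" by blast
  then show "(v,w) \<in> path_arcs xs"
    unfolding path_arcs_def in_set_zip by (intro exI[of _ i]) (auto simp: nth_tl)
qed

lemma cycle_arcs_iff:
  assumes "xs \<noteq> []"
  shows "(v,w) \<in> cycle_arcs xs \<longleftrightarrow> (\<exists>i<length xs. v = xs!i \<and> w = xs!(Suc i mod length xs))"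
proof -
  have "cycle_arcs xs = set (zip xs (rotate1 xs))"
    unfolding cycle_arcs_def using rotate1_hd_tl[OF assms] by simp
  then have "(v,w) \<in> cycle_arcs xs \<longleftrightarrow> (\<exists>n. xs ! n = v \<and> rotate1 xs ! n = w \<and> n < length xs)"
    by (simp add: in_set_zip)
  also have "\<dots> \<longleftrightarrow> (\<exists>i<length xs. v = xs!i \<and> w = xs!(Suc i mod length xs))"
    by (metis nth_rotate1)
  finally show ?thesis .
qed

lemma pa_fun: "distinct xs \<Longrightarrow> (v,w) \<in> path_arcs xs \<Longrightarrow> (v,w') \<in> path_arcs xs \<Longrightarrow> w = w'"
proof -
  assume d: "distinct xs" and "(v,w) \<in> path_arcs xs" "(v,w') \<in> path_arcs xs"
  then obtain i j where "Suc i < length xs" "v = xs!i" "w = xs!Suc i"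
    "Suc j < length xs" "v = xs!j" "w' = xs!Suc j" unfolding path_arcs_iff by blast
  moreover then have "i = j" using d nth_eq_iff_index_eq[OF d, of i j] by simp
  ultimately show ?thesis by simp
qed

lemma pa_inj: "distinct xs \<Longrightarrow> (v,w) \<in> path_arcs xs \<Longrightarrow> (v',w) \<in> path_arcs xs \<Longrightarrow> v = v'"
proof -
  assume d: "distinct xs" and "(v,w) \<in> path_arcs xs" "(v',w) \<in> path_arcs xs"
  then obtain i j where "Suc i < length xs" "v = xs!i" "w = xs!Suc i"
    "Suc j < length xs" "v' = xs!j" "w = xs!Suc j" unfolding path_arcs_iff by blast
  moreover then have "Suc i = Suc j" using d nth_eq_iff_index_eq[OF d, of "Suc i" "Suc j"] by simp
  ultimately show ?thesis by simp
qed

lemma pa_set: "distinct xs \<Longrightarrow> (v,w) \<in> path_arcs xs \<Longrightarrow>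
   v \<in> set xs \<and> w \<in> set xs \<and> v \<noteq> last xs \<and> w \<noteq> hd xs"
proof -
  assume d: "distinct xs" and "(v,w) \<in> path_arcs xs"
  then obtain i where i: "Suc i < length xs" "v = xs!i" "w = xs!Suc i"
    unfolding path_arcs_iff by blast
  have ne: "xs \<noteq> []" using i by auto
  have l: "last xs = xs ! (length xs - 1)" using last_conv_nth[OF ne] .
  have h: "hd xs = xs ! 0" using hd_conv_nth[OF ne] .
  have "v \<noteq> last xs" unfolding l i(2) using nth_eq_iff_index_eq[OF d, of i "length xs - 1"] i(1) by simp
  moreover have "w \<noteq> hd xs" unfolding h i(3) using nth_eq_iff_index_eq[OF d, of "Suc i" 0] i(1) ne by simp
  moreover have "v \<in> set xs" "w \<in> set xs" using i by auto
  ultimately show ?thesis by blast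
qed

lemma pa_ex: "distinct xs \<Longrightarrow> v \<in> set xs \<Longrightarrow> v \<noteq> last xs \<Longrightarrow> \<exists>w. (v,w) \<in> path_arcs xs"
proof -
  assume d: "distinct xs" and v: "v \<in> set xs" "v \<noteq> last xs"
  then obtain i where i: "i < length xs" "v = xs!i" by (auto simp: in_set_conv_nth)
  have ne: "xs \<noteq> []" using i by auto
  have "i \<noteq> length xs - 1" using v(2) i last_conv_nth[OF ne] by auto
  then have "Suc i < length xs" using i by linarith
  with i show ?thesis unfolding path_arcs_iff by blast
qed

lemma ca_fun: "distinct xs \<Longrightarrow> xs \<noteq> [] \<Longrightarrow> (v,w) \<in> cycle_arcs xs \<Longrightarrow> (v,w') \<in> cycle_arcs xs \<Longrightarrow> w = w'"
proof -
  assume d: "distinct xs" "xs \<noteq> []" and a1: "(v,w) \<in> cycle_arcs xs" and a2: "(v,w') \<in> cycle_arcs xs"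
  from a1 d obtain i where i: "i < length xs" "v = xs!i" "w = xs!(Suc i mod length xs)"
    by (auto simp: cycle_arcs_iff)
  from a2 d obtain j where j: "j < length xs" "v = xs!j" "w' = xs!(Suc j mod length xs)"
    by (auto simp: cycle_arcs_iff)
  have "i = j" using i j nth_eq_iff_index_eq[OF d(1), of i j] by simp
  then show ?thesis using i j by simp
qed

lemma ca_inj: "distinct xs \<Longrightarrow> xs \<noteq> [] \<Longrightarrow> (v,w) \<in> cycle_arcs xs \<Longrightarrow> (v',w) \<in> cycle_arcs xs \<Longrightarrow> v = v'"
proof -
  assume d: "distinct xs" "xs \<noteq> []" and a1: "(v,w) \<in> cycle_arcs xs" and a2: "(v',w) \<in> cycle_arcs xs"
  from a1 d obtain i where i: "i < length xs" "v = xs!i" "w = xs!(Suc i mod length xs)"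
    by (auto simp: cycle_arcs_iff)
  from a2 d obtain j where j: "j < length xs" "v' = xs!j" "w = xs!(Suc j mod length xs)"
    by (auto simp: cycle_arcs_iff)
  have lt: "Suc i mod length xs < length xs" "Suc j mod length xs < length xs" using d by auto
  have e: "Suc i mod length xs = Suc j mod length xs"
    using i j nth_eq_iff_index_eq[OF d(1) lt] by simp
  have "i = j"
  proof (cases "Suc i = length xs")
    case True
    then have "Suc j mod length xs = 0" using e by simp
    then have "Suc j = length xs" using j(1)
      by (metis Suc_leI le_neq_implies_less mod_less nat.distinct(1))
    then show ?thesis using True by simp
  next
    case False
    then have "Suc i < length xs" using i by linarith
    then have "Suc i = Suc j mod length xs" using e by simp
    moreover have "Suc j \<noteq> length xs" using \<open>Suc i < length xs\<close> calculation by auto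
    ultimately show ?thesis using j(1) by simp
  qed
  then show "v = v'" using i j by simp
qed

lemma ca_set: "xs \<noteq> [] \<Longrightarrow> (v,w) \<in> cycle_arcs xs \<Longrightarrow> v \<in> set xs \<and> w \<in> set xs"
  by (auto simp: cycle_arcs_iff)

lemma ca_ex: "xs \<noteq> [] \<Longrightarrow> v \<in> set xs \<Longrightarrow> \<exists>w. (v,w) \<in> cycle_arcs xs"
  by (auto simp: cycle_arcs_iff in_set_conv_nth)

lemma sqp_struct:
  assumes p: "distinct p" "p \<noteq> []" and cyc: "\<forall>c\<in>C. c \<noteq> [] \<and> distinct c"
    and disj1: "\<forall>c\<in>C. set c \<inter> set p = {}"
    and disj2: "\<forall>c\<in>C. \<forall>c'\<in>C. c \<noteq> c' \<longrightarrow> set c \<inter> set c' = {}"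
    and cov: "set p \<union> (\<Union>c\<in>C. set c) = UNIV"
    and PP: "P = path_arcs p \<union> (\<Union>c\<in>C. cycle_arcs c)"
  shows "\<exists>f. inj f \<and> f (last p) = hd p \<and> P = {(v, f v) | v. v \<noteq> last p}
            \<and> (\<forall>v. v \<in> set p \<longleftrightarrow> f v \<in> set p)"
proof -
  have cne: "c \<noteq> [] \<and> distinct c" if "c \<in> C" for c using cyc that by blast
  have dj: "x \<notin> set p" if "c \<in> C" "x \<in> set c" for c x
    using disj1 that by blast
  have dj2: "c = c'" if "c \<in> C" "c' \<in> C" "x \<in> set c" "x \<in> set c'" for c c' x
    using disj2 that by blast
  have src: "((v,w) \<in> path_arcs p \<and> v \<in> set p \<and> w \<in> set p \<and> v \<noteq> last p \<and> w \<noteq> hd p) \<or>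
     (\<exists>c\<in>C. (v,w) \<in> cycle_arcs c \<and> v \<in> set c \<and> w \<in> set c)" if "(v,w) \<in> P" for v w
  proof -
    have "(v,w) \<in> path_arcs p \<or> (\<exists>c\<in>C. (v,w) \<in> cycle_arcs c)" using that unfolding PP by blast
    then show ?thesis
    proof
      assume "(v,w) \<in> path_arcs p" then show ?thesis using pa_set[OF p(1)] by blast
    next
      assume "\<exists>c\<in>C. (v,w) \<in> cycle_arcs c"
      then obtain c where "c \<in> C" "(v,w) \<in> cycle_arcs c" by blast
      then show ?thesis using ca_set[of c v w] cne[of c] by blast
    qed
  qed
  have funP: "w = w'" if A: "(v,w) \<in> P" "(v,w') \<in> P" for v w w'
    using src[OF A(1)] src[OF A(2)]
  proof (elim disjE conjE bexE)
    assume "(v, w) \<in> path_arcs p" "(v, w') \<in> path_arcs p"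
    then show ?thesis using pa_fun[OF p(1)] by blast
  next
    fix c assume "v \<in> set p" "c \<in> C" "v \<in> set c" then show ?thesis using dj by blast
  next
    fix c assume "v \<in> set p" "c \<in> C" "v \<in> set c" then show ?thesis using dj by blast
  next
    fix c c' assume "c \<in> C" "c' \<in> C" "v \<in> set c" "v \<in> set c'"
      "(v, w) \<in> cycle_arcs c" "(v, w') \<in> cycle_arcs c'"
    then show ?thesis using dj2[of c c' v] ca_fun[of c v w w'] cne[of c] by blast
  qed
  have injP: "v = v'" if A: "(v,w) \<in> P" "(v',w) \<in> P" for v v' w
    using src[OF A(1)] src[OF A(2)]
  proof (elim disjE conjE bexE)
    assume "(v, w) \<in> path_arcs p" "(v', w) \<in> path_arcs p"
    then show ?thesis using pa_inj[OF p(1)] by blast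
  next
    fix c assume "w \<in> set p" "c \<in> C" "w \<in> set c" then show ?thesis using dj by blast
  next
    fix c assume "w \<in> set p" "c \<in> C" "w \<in> set c" then show ?thesis using dj by blast
  next
    fix c c' assume "c \<in> C" "c' \<in> C" "w \<in> set c" "w \<in> set c'"
      "(v, w) \<in> cycle_arcs c" "(v', w) \<in> cycle_arcs c'"
    then show ?thesis using dj2[of c c' w] ca_inj[of c v w v'] cne[of c] by blast
  qed
  have hdp: "hd p \<in> set p" "last p \<in> set p" using p by auto
  have nolast: "(last p, w) \<notin> P" for w
  proof
    assume "(last p, w) \<in> P"
    from src[OF this] show False using dj hdp by blast
  qed
  have nohd: "(v, hd p) \<notin> P" for v
  proof
    assume "(v, hd p) \<in> P"
    from src[OF this] show False using dj hdp by blast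
  qed
  have ex: "\<exists>w. (v,w) \<in> P" if "v \<noteq> last p" for v
  proof (cases "v \<in> set p")
    case True then show ?thesis using pa_ex[OF p(1) True that] PP by blast
  next
    case False
    then obtain c where "c \<in> C" "v \<in> set c" using cov by blast
    then show ?thesis using ca_ex[of c v] cyc PP by blast
  qed
  have closed: "v \<in> set p \<longleftrightarrow> w \<in> set p" if A: "(v,w) \<in> P" for v w
    using src[OF A] dj by blast
  define f where "f v = (if v = last p then hd p else (SOME w. (v,w) \<in> P))" for v
  have fP: "(v, f v) \<in> P" if "v \<noteq> last p" for v
    using someI_ex[OF ex[OF that]] that by (simp add: f_def)
  have Pf: "v \<noteq> last p \<and> w = f v" if A: "(v,w) \<in> P" for v w
  proof -
    have "v \<noteq> last p" using nolast A by blast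
    moreover then have "w = f v" using funP[OF A fP] by blast
    ultimately show ?thesis by blast
  qed
  have "inj f"
  proof (rule injI)
    fix x y assume xy: "f x = f y"
    show "x = y"
    proof (cases "x = last p")
      case True
      show ?thesis
      proof (rule ccontr)
        assume "x \<noteq> y"
        then have "(y, hd p) \<in> P" using fP[of y] True xy by (simp add: f_def)
        then show False using nohd by blast
      qed
    next
      case False
      show ?thesis
      proof (cases "y = last p")
        case True
        then have "(x, hd p) \<in> P" using fP[of x] False xy by (simp add: f_def)
        then show ?thesis using nohd by blast
      next
        case False2: False
        then show ?thesis using fP[OF False] fP[OF False2] xy injP by metis
      qed
    qed
  qed
  moreover have "f (last p) = hd p" by (simp add: f_def)
  moreover have "P = {(v, f v) | v. v \<noteq> last p}"
  proof (rule set_eqI)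
    fix x show "x \<in> P \<longleftrightarrow> x \<in> {(v, f v) | v. v \<noteq> last p}"
      using Pf fP by (cases x) blast
  qed
  moreover have "\<forall>v. v \<in> set p \<longleftrightarrow> f v \<in> set p"
  proof
    fix v show "v \<in> set p \<longleftrightarrow> f v \<in> set p"
    proof (cases "v = last p")
      case True then show ?thesis using hdp \<open>f (last p) = hd p\<close> by simp
    next
      case False then show ?thesis using closed[OF fP[OF False]] by simp
    qed
  qed
  ultimately show ?thesis by blast
qed

definition inH :: "'g::ab_group_add \<Rightarrow> 'g \<Rightarrow> bool" where
  "inH d x \<longleftrightarrow> (\<exists>i. x = mul i d)"

lemma inH_0[simp]: "inH d 0" unfolding inH_def by (intro exI[of _ 0]) simp

lemma inH_self[simp]: "inH d d" unfolding inH_def by (intro exI[of _ 1]) simp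

lemma inH_mul[simp]: "inH d (mul i d)" unfolding inH_def by blast

lemma inH_add: "inH d x \<Longrightarrow> inH d y \<Longrightarrow> inH d (x + y)"
  unfolding inH_def by (metis mul_add)

lemma inH_neg: "inH (d::'g::{ab_group_add,finite}) x \<Longrightarrow> inH d (- x)"
proof -
  assume "inH d x"
  then obtain i where i: "x = mul i d" unfolding inH_def by blast
  let ?N = "card (UNIV::'g set)"
  have N: "?N \<ge> 1" by (simp add: Suc_leI finite_UNIV_card_ge_0)
  have "mul ((?N - 1) * i) d + mul i d = mul (?N * i) d"
    by (metis N mul_add add_mult_distrib le_add_diff_inverse2 mult_1)
  also have "\<dots> = 0" by (metis mul_card mult.commute mul_mult)
  finally have "- x = mul ((?N - 1) * i) d" unfolding i by (metis add.commute add_eq_0_iff)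
  then show ?thesis unfolding inH_def by blast
qed

lemma inH_diff: "inH (d::'g::{ab_group_add,finite}) x \<Longrightarrow> inH d y \<Longrightarrow> inH d (x - y)"
  by (metis diff_conv_add_uminus inH_add inH_neg)

lemma inH_uminus_iff: "inH (d::'g::{ab_group_add,finite}) (- x) \<longleftrightarrow> inH d x"
  by (metis inH_neg minus_minus)

locale qpath =
  fixes a b :: "'g::{ab_group_add,finite}" and t s :: 'g and f :: "'g \<Rightarrow> 'g"
  assumes ab: "a \<noteq> b" and finj: "inj f" and ft: "f t = s"
    and fstep: "\<And>v. v \<noteq> t \<Longrightarrow> f v = v + a \<or> f v = v + b"
begin

definition g where "g v = f v - v"

definition Bs where "Bs = {v. v \<noteq> t \<and> g v = b}"

lemma fsurj: "surj f" using finite_UNIV_inj_surj[OF finite_UNIV finj] .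

lemma f_g: "f v = v + g v" unfolding g_def by simp

lemma g_ab: "v \<noteq> t \<Longrightarrow> g v = a \<or> g v = b"
  using fstep unfolding g_def by (metis add_diff_cancel_left')

lemma g_t: "g t = s - t" unfolding g_def ft ..

lemma sum_g: "(\<Sum>v\<in>UNIV. g v) = 0"
proof -
  have "(\<Sum>v\<in>UNIV. f v) = (\<Sum>v\<in>f ` UNIV. v)"
    using sum.reindex[of f UNIV "\<lambda>v. v"] finj by simp
  also have "\<dots> = (\<Sum>v\<in>UNIV. v)" using fsurj by simp
  finally show ?thesis unfolding g_def by (simp add: sum_subtractf)
qed

lemma s_a_t: "s - a - t = mul (card Bs) (a - b)"
proof -
  define As where "As = {v. v \<noteq> t \<and> g v \<noteq> b}"
  have U: "UNIV = insert t (As \<union> Bs)" unfolding As_def Bs_def by auto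
  have dis: "As \<inter> Bs = {}" unfolding As_def Bs_def by auto
  have tn: "t \<notin> As \<union> Bs" unfolding As_def Bs_def by auto
  have sA: "(\<Sum>v\<in>As. g v) = mul (card As) a"
  proof -
    have "(\<Sum>v\<in>As. g v) = (\<Sum>v\<in>As. a)"
      by (rule sum.cong) (auto simp: As_def dest: g_ab)
    then show ?thesis by (simp add: sum_const_mul)
  qed
  have sB: "(\<Sum>v\<in>Bs. g v) = mul (card Bs) b"
  proof -
    have "(\<Sum>v\<in>Bs. g v) = (\<Sum>v\<in>Bs. b)"
      by (rule sum.cong) (auto simp: Bs_def)
    then show ?thesis by (simp add: sum_const_mul)
  qed
  have "(\<Sum>v\<in>UNIV. g v) = g t + (\<Sum>v\<in>As. g v) + (\<Sum>v\<in>Bs. g v)"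
    unfolding U using tn dis by (simp add: sum.union_disjoint add.assoc)
  then have e0: "0 = (s - t) + mul (card As) a + mul (card Bs) b"
    using sum_g sA sB g_t by simp
  have cN: "card As + 1 + card Bs = card (UNIV::'g set)"
    unfolding U using tn dis by (simp add: card_Un_disjoint)
  have "mul (card As + 1) a + mul (card Bs) a = 0"
    by (metis cN mul_add mul_card)
  then have m1: "mul (card As + 1) a = - mul (card Bs) a" by (simp add: eq_neg_iff_add_eq_0)
  have "mul (card As + 1) a = mul (card As) a + a" by (simp add: mul_add)
  then have "s - a - t = - mul (card As + 1) a - mul (card Bs) b"
    using e0 by (simp add: algebra_simps eq_neg_iff_add_eq_0)
  also have "\<dots> = mul (card Bs) a - mul (card Bs) b" using m1 by simp
  finally show ?thesis by (simp add: mul_diff)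
qed

lemma LR:
  assumes ud: "u + (a - b) \<noteq> t"
  shows "g (u + (a - b)) = (if u + a = s then a else if u = t then b else g u)"
proof -
  define y where "y = u + (a - b)"
  have dne: "a - b \<noteq> 0" using ab by simp
  have yt: "y \<noteq> t" using ud y_def by simp
  have gud: "g y = a \<or> g y = b" using g_ab[OF yt] .
  have yb: "u + a - y = b" unfolding y_def by (simp add: algebra_simps)
  have fud: "g y = b \<longleftrightarrow> f y = u + a"
  proof -
    have "f y = u + a \<longleftrightarrow> y + g y = u + a" by (simp add: f_g)
    also have "\<dots> \<longleftrightarrow> g y = u + a - y" using eq_diff_eq[of "g y" "u + a" y] by (simp add: add.commute)
    finally show ?thesis using yb by simp
  qed
  have into: "x = u \<or> x = y" if "x \<noteq> t" "f x = u + a" for x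
  proof -
    have "f x = x + a \<or> f x = x + b" using fstep[OF that(1)] .
    then show ?thesis
    proof
      assume "f x = x + a" then have "x = u" using that(2) by simp
      then show ?thesis by simp
    next
      assume "f x = x + b" then have "x + b = u + a" using that(2) by simp
      then have "x = u + a - b" by (simp add: eq_diff_eq)
      then show ?thesis unfolding y_def by (simp add: add_diff_eq)
    qed
  qed
  have uy: "u \<noteq> y" using dne unfolding y_def by simp
  have main: "g y = (if u + a = s then a else if u = t then b else g u)"
  proof (cases "u + a = s")
    case True
    have "f y \<noteq> u + a"
    proof
      assume "f y = u + a"
      then have "f y = f t" using True ft by simp
      then show False using finj yt by (meson injD)
    qed
    then have "g y = a" using gud fud by blast
    then show ?thesis using True by simp
  next
    case False
    obtain x where x: "f x = u + a" using fsurj by (metis surjD)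
    have xt: "x \<noteq> t" using x False ft by auto
    show ?thesis
    proof (cases "u = t")
      case True
      then have "x = y" using into[OF xt x] xt by blast
      then have "g y = b" using fud x by simp
      then show ?thesis using True False by simp
    next
      case ut: False
      have gu: "g u = a \<or> g u = b" using g_ab[OF ut] .
      show ?thesis
      proof (cases "g u = a")
        case True
        then have fu: "f u = u + a" using f_g[of u] by simp
        have "f y \<noteq> u + a"
        proof
          assume "f y = u + a"
          then have "f y = f u" using fu by simp
          then have "y = u" using finj by (simp add: inj_eq)
          then show False using uy by simp
        qed
        then have "g y = a" using gud fud by blast
        then show ?thesis using True False ut by simp
      next
        case gb: False
        then have gub: "g u = b" using gu by simp
        then have "f u \<noteq> u + a" using f_g[of u] ab by simp
        then have "x = y" using into[OF xt x] x by blast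
        then have "g y = b" using fud x by simp
        then show ?thesis using gub False ut by simp
      qed
    qed
  qed
  then show ?thesis unfolding y_def .
qed

lemma CC:
  assumes "\<not> inH (a - b) (x - t)"
  shows "g (x + mul i (a - b)) = g x"
proof (induction i)
  case 0 then show ?case by simp
next
  case (Suc i)
  define u where "u = x + mul i (a - b)"
  have nu: "\<not> inH (a - b) (u - t)"
  proof
    assume "inH (a - b) (u - t)"
    then have "inH (a-b) (u - t - mul i (a-b))" using inH_diff inH_mul by blast
    moreover have "u - t - mul i (a-b) = x - t" unfolding u_def by simp
    ultimately show False using assms by simp
  qed
  have nu2: "\<not> inH (a - b) (u + (a - b) - t)"
  proof
    assume "inH (a - b) (u + (a - b) - t)"
    then have "inH (a-b) (u + (a-b) - t - (a - b))" using inH_diff inH_self by blast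
    moreover have "u + (a-b) - t - (a - b) = u - t" by (simp add: algebra_simps)
    ultimately show False using nu by simp
  qed
  have "u + (a - b) \<noteq> t" using nu2 by auto
  moreover have "u \<noteq> t" using nu by auto
  moreover have "u + a \<noteq> s"
  proof
    assume "u + a = s"
    then have "u - t = s - a - t" by (simp add: algebra_simps)
    then show False using nu s_a_t by simp
  qed
  ultimately have L: "g (u + (a-b)) = g u" using LR by simp
  have e: "x + mul (Suc i) (a - b) = u + (a - b)" unfolding u_def by (simp add: algebra_simps)
  have "g (x + mul (Suc i) (a - b)) = g (u + (a - b))" by (simp only: e)
  also have "\<dots> = g u" by (rule L)
  also have "\<dots> = g x" using Suc.IH u_def by simp
  finally show ?case .
qed

end

lemma inH_mulq: "inH d x \<Longrightarrow> inH d (mul q x)"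
  unfolding inH_def by (metis mul_mult mult.commute)

lemma inH_sum: "finite A \<Longrightarrow> (\<And>i. i \<in> A \<Longrightarrow> inH (d::'g::{ab_group_add,finite}) (h i)) \<Longrightarrow> inH d (\<Sum>i\<in>A. h i)"
  by (induction rule: finite_induct) (auto intro: inH_add)

locale levels =
  fixes a b t :: "'g::{ab_group_add,finite}"
  assumes gen: "generates {a, b}"
begin

lemma gen_mul: "\<exists>i. inH (a - b) (x - mul i a)"
proof -
  have "x \<in> subgroup_gen {a, b}" using gen unfolding generates_def by simp
  then show ?thesis
  proof (induction rule: subgroup_gen.induct)
    case zero
    then show ?case by (intro exI[of _ 0]) simp
  next
    case (gen y)
    then show ?case
    proof
      assume "y = a" then show ?thesis by (intro exI[of _ 1]) simp
    next
      assume "y \<in> {b}"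
      then have "y - mul 1 a = - (a - b)" by simp
      then show ?thesis using inH_neg[OF inH_self[of "a - b"]] by metis
    qed
  next
    case (add x y)
    then obtain i j where "inH (a - b) (x - mul i a)" "inH (a - b) (y - mul j a)" by blast
    then have "inH (a - b) ((x - mul i a) + (y - mul j a))" by (rule inH_add)
    moreover have "(x - mul i a) + (y - mul j a) = x + y - mul (i + j) a"
      by (simp add: mul_add algebra_simps)
    ultimately show ?case by metis
  next
    case (neg x)
    then obtain i where i: "inH (a - b) (x - mul i a)" by blast
    let ?N = "card (UNIV::'g set)"
    have N: "?N \<ge> 1" by (simp add: Suc_leI finite_UNIV_card_ge_0)
    have z: "mul ((?N - 1) * i) a + mul i a = 0"
    proof -
      have "mul ((?N - 1) * i) a + mul i a = mul (?N * i) a"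
        by (metis N mul_add add_mult_distrib le_add_diff_inverse2 mult_1)
      also have "\<dots> = 0" by (metis mul_card mult.commute mul_mult)
      finally show ?thesis .
    qed
    have "- x - mul ((?N - 1) * i) a = - (x - mul i a) - (mul ((?N - 1) * i) a + mul i a)"
      by (simp add: algebra_simps)
    also have "\<dots> = - (x - mul i a)" using z by simp
    finally have "- x - mul ((?N - 1) * i) a = - (x - mul i a)" .
    then show ?case using inH_neg[OF i] by metis
  qed
qed

definition m where "m = (LEAST k. 0 < k \<and> inH (a - b) (mul k a))"

lemma m_ex: "0 < m \<and> inH (a - b) (mul m a)"
proof -
  have "0 < card (UNIV::'g set) \<and> inH (a - b) (mul (card (UNIV::'g set)) a)"
    by (simp add: finite_UNIV_card_ge_0 mul_card)
  then show ?thesis unfolding m_def by (rule LeastI)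
qed

lemma m_pos: "0 < m" using m_ex by simp

lemma m_min: "0 < k \<Longrightarrow> k < m \<Longrightarrow> \<not> inH (a - b) (mul k a)"
  unfolding m_def using not_less_Least by blast

lemma red: "inH (a - b) (mul i a - mul (i mod m) a)"
proof -
  have "mul i a = mul (i mod m) a + mul (i div m * m) a"
    by (metis mul_add add.commute div_mult_mod_eq)
  moreover have "inH (a - b) (mul (i div m * m) a)"
    using inH_mulq[OF conjunct2[OF m_ex], of "i div m"] by (simp add: mul_mult)
  ultimately show ?thesis by simp
qed

lemma uniq: "i < m \<Longrightarrow> j < m \<Longrightarrow> inH (a - b) (mul i a - mul j a) \<Longrightarrow> i = j"
proof -
  assume ij: "i < m" "j < m" and h: "inH (a - b) (mul i a - mul j a)"
  show "i = j"
  proof (rule ccontr)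
    assume "i \<noteq> j"
    then consider "i < j" | "j < i" by linarith
    then show False
    proof cases
      case 1
      then have "mul j a - mul i a = mul (j - i) a"
        by (metis add_diff_cancel_left' le_add_diff_inverse less_imp_le mul_add)
      moreover have "inH (a - b) (mul j a - mul i a)"
        using inH_neg[OF h] by (simp add: minus_diff_eq)
      ultimately show False using m_min[of "j - i"] 1 ij by simp
    next
      case 2
      then have "mul i a - mul j a = mul (i - j) a"
        by (metis add_diff_cancel_left' le_add_diff_inverse less_imp_le mul_add)
      then show False using m_min[of "i - j"] 2 ij h by simp
    qed
  qed
qed

definition lev where "lev v = (LEAST i. inH (a - b) (v - t - mul i a))"

lemma lev_H: "inH (a - b) (v - t - mul (lev v) a)"
  unfolding lev_def using gen_mul[of "v - t"] by (metis LeastI)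

lemma lev_lt: "lev v < m"
proof -
  obtain i where i: "inH (a - b) (v - t - mul i a)" using gen_mul by blast
  have "inH (a - b) ((v - t - mul i a) + (mul i a - mul (i mod m) a))"
    using inH_add[OF i red] .
  then have "inH (a - b) (v - t - mul (i mod m) a)" by (simp add: algebra_simps)
  then have "lev v \<le> i mod m" unfolding lev_def by (rule Least_le)
  also have "\<dots> < m" using m_pos by simp
  finally show ?thesis .
qed

lemma lev_eq: "i < m \<Longrightarrow> inH (a - b) (v - t - mul i a) \<Longrightarrow> lev v = i"
proof -
  assume i: "i < m" and h: "inH (a - b) (v - t - mul i a)"
  have "inH (a - b) ((v - t - mul i a) - (v - t - mul (lev v) a))"
    using inH_diff[OF h lev_H] .
  moreover have "(v - t - mul i a) - (v - t - mul (lev v) a) = mul (lev v) a - mul i a"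
    by (simp add: algebra_simps)
  ultimately show ?thesis using uniq[OF lev_lt i] by simp
qed

lemma lev_eqmod: "inH (a - b) (v - t - mul i a) \<Longrightarrow> lev v = i mod m"
proof -
  assume h: "inH (a - b) (v - t - mul i a)"
  have "inH (a - b) ((v - t - mul i a) + (mul i a - mul (i mod m) a))"
    using inH_add[OF h red] .
  then have "inH (a - b) (v - t - mul (i mod m) a)" by (simp add: algebra_simps)
  then show ?thesis using lev_eq m_pos by simp
qed

lemma lev_same: "inH (a - b) (v - w) \<Longrightarrow> lev v = lev w"
proof -
  assume h: "inH (a - b) (v - w)"
  have "inH (a - b) ((v - w) + (w - t - mul (lev w) a))" using inH_add[OF h lev_H] .
  then have "inH (a - b) (v - t - mul (lev w) a)" by (simp add: algebra_simps)
  then show ?thesis using lev_eq lev_lt by blast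
qed

lemma lev_step: "inH (a - b) (y - (v + a)) \<Longrightarrow> lev y = Suc (lev v) mod m"
proof -
  assume h: "inH (a - b) (y - (v + a))"
  have "inH (a - b) ((y - (v + a)) + (v - t - mul (lev v) a))" using inH_add[OF h lev_H] .
  then have "inH (a - b) (y - t - mul (Suc (lev v)) a)" by (simp add: algebra_simps)
  then show ?thesis by (rule lev_eqmod)
qed

lemma lev0: "lev v = 0 \<longleftrightarrow> inH (a - b) (v - t)"
proof
  assume "lev v = 0" then show "inH (a - b) (v - t)" using lev_H[of v] by simp
next
  assume "inH (a - b) (v - t)" then show "lev v = 0" using lev_eq[of 0 v] m_pos by simp
qed

lemma lev_rep: "i < m \<Longrightarrow> lev (t + mul i a) = i"
  by (rule lev_eq) simp_all

lemma lev_shift: "i < m \<Longrightarrow> lev v = 0 \<Longrightarrow> lev (v + mul i a) = i"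
proof -
  assume i: "i < m" and "lev v = 0"
  then have "inH (a - b) (v - t)" using lev0 by simp
  moreover have "v + mul i a - t - mul i a = v - t" by simp
  ultimately show ?thesis using lev_eq[OF i] by metis
qed

lemma card_lev: "i < m \<Longrightarrow> card {v. lev v = i} = card {v. lev v = 0}"
proof -
  assume i: "i < m"
  have "{v. lev v = i} = (\<lambda>v. v + mul i a) ` {v. lev v = 0}"
  proof (rule set_eqI, rule iffI)
    fix w assume "w \<in> {v. lev v = i}"
    then have w: "lev w = i" by simp
    have "inH (a - b) (w - t - mul i a)" using lev_H[of w] w by simp
    then have "lev (w - mul i a) = 0" using lev0 by (simp add: algebra_simps)
    then show "w \<in> (\<lambda>v. v + mul i a) ` {v. lev v = 0}"
      by (intro image_eqI[of _ _ "w - mul i a"]) simp_all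
  next
    fix w assume "w \<in> (\<lambda>v. v + mul i a) ` {v. lev v = 0}"
    then show "w \<in> {v. lev v = i}" using lev_shift[OF i] by auto
  qed
  moreover have "inj (\<lambda>v. v + mul i a)" by (simp add: inj_def)
  ultimately show ?thesis by (simp add: card_image inj_on_def)
qed

end

context levels
begin

lemma lev_t: "lev t = 0" using lev_rep[of 0] m_pos by simp

lemma count_decomp:
  assumes G: "\<And>v. 0 < lev v \<Longrightarrow> G v = G (t + mul (lev v) a)"
  shows "card {v. v \<noteq> t \<and> G v = b} =
     card {v. v \<noteq> t \<and> G v = b \<and> lev v = 0} + card {v. lev v = 0} * card {i\<in>{1..<m}. G (t + mul i a) = b}"
proof -
  define X where "X = {v. v \<noteq> t \<and> G v = b}"
  define c where "c = card {v. lev v = 0}"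
  have "card X = (\<Sum>i\<in>{..<m}. card {v\<in>X. lev v = i})"
  proof -
    have "(\<Sum>i\<in>{..<m}. (\<Sum>v\<in>{v\<in>X. lev v = i}. (1::nat))) = (\<Sum>v\<in>X. 1)"
      by (rule sum.group) (auto simp: lev_lt)
    then show ?thesis by simp
  qed
  also have "{..<m} = insert 0 {1..<m}" using m_pos by auto
  also have "(\<Sum>i\<in>insert 0 {1..<m}. card {v\<in>X. lev v = i}) =
      card {v\<in>X. lev v = 0} + (\<Sum>i\<in>{1..<m}. card {v\<in>X. lev v = i})"
    by (subst sum.insert) auto
  also have "(\<Sum>i\<in>{1..<m}. card {v\<in>X. lev v = i}) = (\<Sum>i\<in>{1..<m}. if G (t + mul i a) = b then c else 0)"
  proof (rule sum.cong)
    fix i assume i: "i \<in> {1..<m}"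
    have "{v\<in>X. lev v = i} = (if G (t + mul i a) = b then {v. lev v = i} else {})"
    proof -
      have H: "v \<noteq> t \<and> G v = G (t + mul i a)" if "lev v = i" for v
        using G[of v] that i lev_t by auto
      show ?thesis
      proof (cases "G (t + mul i a) = b")
        case True
        have "{v\<in>X. lev v = i} = {v. lev v = i}"
        proof (rule set_eqI)
          fix v show "v \<in> {v\<in>X. lev v = i} \<longleftrightarrow> v \<in> {v. lev v = i}"
            unfolding X_def mem_Collect_eq using H[of v] True by metis
        qed
        then show ?thesis using True by simp
      next
        case False
        have "{v\<in>X. lev v = i} = {}"
        proof (rule set_eqI)
          fix v show "v \<in> {v\<in>X. lev v = i} \<longleftrightarrow> v \<in> {}"
            unfolding X_def mem_Collect_eq using H[of v] False by (metis empty_iff)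
        qed
        then show ?thesis using False by simp
      qed
    qed
    then show "card {v\<in>X. lev v = i} = (if G (t + mul i a) = b then c else 0)"
      using card_lev[of i] i unfolding c_def by simp
  qed simp
  also have "\<dots> = (\<Sum>i\<in>{i\<in>{1..<m}. G (t + mul i a) = b}. c)"
    by (rule sum.inter_filter[symmetric]) simp
  also have "\<dots> = c * card {i\<in>{1..<m}. G (t + mul i a) = b}" by simp
  finally show ?thesis unfolding X_def c_def by simp
qed

end

locale pair =
  Q1: qpath a b t s f + Q2: qpath a b t' s' f' + L: levels a b t
  for a b :: "'g::{ab_group_add,finite}" and t s f t' s' f' +
  assumes samecard: "card Q1.Bs = card Q2.Bs"
begin

definition e where "e = t' - t"

lemma te: "t' = t + e" unfolding e_def by simp

lemma st: "s' = s + e"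
proof -
  have "s - a - t = s' - a - t'" using Q1.s_a_t Q2.s_a_t samecard by simp
  then show ?thesis unfolding e_def by (simp add: algebra_simps)
qed

lemma gtt: "Q2.g t' = Q1.g t"
proof -
  have "Q2.g t' = s' - t'" by (rule Q2.g_t)
  also have "\<dots> = s - t" using st unfolding e_def by (simp add: algebra_simps)
  also have "\<dots> = Q1.g t" using Q1.g_t by simp
  finally show ?thesis .
qed

lemma A0: "Q1.g (t + mul i (a - b)) = Q2.g (t' + mul i (a - b))"
proof (induction i)
  case 0
  show ?case using gtt by simp
next
  case (Suc i)
  define u where "u = t + mul i (a - b)"
  define u' where "u' = t' + mul i (a - b)"
  have uu: "u' = u + e" unfolding u_def u'_def e_def by (simp add: algebra_simps)
  have e1: "t + mul (Suc i) (a - b) = u + (a - b)" unfolding u_def by (simp add: algebra_simps)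
  have e2: "t' + mul (Suc i) (a - b) = u' + (a - b)" unfolding u'_def by (simp add: algebra_simps)
  have x1: "u' + (a - b) = (u + (a - b)) + e" using uu by (simp add: algebra_simps)
  have x2: "u' + a = (u + a) + e" using uu by (simp add: algebra_simps)
  have c1: "u' + a = s' \<longleftrightarrow> u + a = s" unfolding x2 st by simp
  have c2: "u' = t' \<longleftrightarrow> u = t" using uu te by (metis add_right_cancel)
  have c3: "u' + (a - b) = t' \<longleftrightarrow> u + (a - b) = t" using x1 te by (metis add_right_cancel)
  show ?case
  proof (cases "u + (a - b) = t")
    case True
    then have "u' + (a - b) = t'" using c3 by simp
    then show ?thesis unfolding e1 e2 using True gtt by simp
  next
    case False
    then have F2: "u' + (a - b) \<noteq> t'" using c3 by simp
    have "Q1.g (u + (a - b)) = Q2.g (u' + (a - b))"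
      using Q1.LR[OF False] Q2.LR[OF F2] c1 c2 Suc.IH u_def u'_def by simp
    then show ?thesis unfolding e1 e2 .
  qed
qed

lemma A0': "inH (a - b) h \<Longrightarrow> Q1.g (t + h) = Q2.g (t' + h)"
  unfolding inH_def using A0 by blast

definition D where "D v = Q2.g (v + e) - Q1.g v"

lemma vt: "v + e = t' \<longleftrightarrow> v = t" unfolding e_def by (auto simp: algebra_simps)

lemma D_H: "inH (a - b) (D v)"
proof (cases "v = t")
  case True
  then have "D v = 0" unfolding D_def using gtt te by simp
  then show ?thesis by simp
next
  case False
  then have "v + e \<noteq> t'" using vt by simp
  then have "Q2.g (v + e) = a \<or> Q2.g (v + e) = b" using Q2.g_ab by blast
  moreover have "Q1.g v = a \<or> Q1.g v = b" using Q1.g_ab False by blast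
  moreover have "inH (a - b) (b - a)" using inH_neg[OF inH_self[of "a - b"]] by simp
  ultimately show ?thesis unfolding D_def by auto
qed

lemma D0: "L.lev v = 0 \<Longrightarrow> D v = 0"
proof -
  assume "L.lev v = 0"
  then have h: "inH (a - b) (v - t)" using L.lev0 by simp
  have "Q1.g (t + (v - t)) = Q2.g (t' + (v - t))" using A0'[OF h] .
  moreover have "t' + (v - t) = v + e" unfolding e_def by (simp add: algebra_simps)
  ultimately show ?thesis unfolding D_def by simp
qed

lemma Dconst: "L.lev v \<noteq> 0 \<Longrightarrow> inH (a - b) (w - v) \<Longrightarrow> D w = D v"
proof -
  assume l: "L.lev v \<noteq> 0" and h: "inH (a - b) (w - v)"
  then have n1: "\<not> inH (a - b) (v - t)" using L.lev0 by simp
  have n2: "\<not> inH (a - b) (v + e - t')" using n1 unfolding e_def by (simp add: algebra_simps)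
  obtain j where j: "w - v = mul j (a - b)" using h unfolding inH_def by blast
  have w1: "w = v + mul j (a - b)" using j by (simp add: algebra_simps)
  have w2: "w + e = v + e + mul j (a - b)" using w1 by (simp add: algebra_simps)
  show ?thesis unfolding D_def w2 using Q1.CC[OF n1, of j] Q2.CC[OF n2, of j] w1 by simp
qed

definition Dl where "Dl i = D (t + mul i a)"

lemma D_Dl: "D v = Dl (L.lev v)"
proof -
  define x where "x = t + mul (L.lev v) a"
  have h: "inH (a - b) (v - x)" using L.lev_H[of v] unfolding x_def by (simp add: algebra_simps)
  have lx: "L.lev x = L.lev v" using L.lev_rep[OF L.lev_lt] x_def by simp
  show ?thesis
  proof (cases "L.lev v = 0")
    case True
    then show ?thesis using D0[OF True] D0[of x] lx unfolding Dl_def x_def by simp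
  next
    case False
    then have "D v = D x" using Dconst[of x v] h lx by simp
    then show ?thesis unfolding Dl_def x_def by simp
  qed
qed

definition tau where "tau v = (\<Sum>i<L.lev v. Dl i)"

lemma tau_H: "inH (a - b) (tau v)"
  unfolding tau_def Dl_def by (rule inH_sum) (auto intro: D_H)

lemma tau0: "L.lev v = 0 \<Longrightarrow> tau v = 0" unfolding tau_def by simp

end

context pair
begin

lemma sumDl: "(\<Sum>i<L.m. Dl i) = 0"
proof -
  define I where "I = {1..<L.m}"
  define x where "x i = t + mul i a" for i
  have xI: "L.lev (x i) = i" "x i \<noteq> t" "x i + e \<noteq> t'" if "i \<in> I" for i
  proof -
    show l: "L.lev (x i) = i" using that L.lev_rep unfolding I_def x_def by simp
    show "x i \<noteq> t" using l L.lev_t that unfolding I_def by auto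
    then show "x i + e \<noteq> t'" using vt by simp
  qed
  have G1: "Q1.g v = Q1.g (t + mul (L.lev v) a)" if "0 < L.lev v" for v
  proof -
    have h: "inH (a - b) (v - (t + mul (L.lev v) a))" using L.lev_H[of v] by (simp add: algebra_simps)
    have "L.lev (t + mul (L.lev v) a) = L.lev v" using L.lev_rep[OF L.lev_lt] .
    then have "L.lev (t + mul (L.lev v) a) \<noteq> 0" using that by simp
    then have n: "\<not> inH (a - b) (t + mul (L.lev v) a - t)" by (metis L.lev0)
    obtain j where j: "v - (t + mul (L.lev v) a) = mul j (a - b)" using h unfolding inH_def by blast
    have "v = (t + mul (L.lev v) a) + mul j (a - b)" using j by (simp add: algebra_simps)
    then show ?thesis using Q1.CC[OF n, of j] by simp
  qed
  have G2: "Q2.g (v + e) = Q2.g (t + mul (L.lev v) a + e)" if "0 < L.lev v" for v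
  proof -
    have h: "inH (a - b) (v - (t + mul (L.lev v) a))" using L.lev_H[of v] by (simp add: algebra_simps)
    have "L.lev (t + mul (L.lev v) a) = L.lev v" using L.lev_rep[OF L.lev_lt] .
    then have "L.lev (t + mul (L.lev v) a) \<noteq> 0" using that by simp
    then have n: "\<not> inH (a - b) (t + mul (L.lev v) a - t)" by (metis L.lev0)
    have eq: "t + mul (L.lev v) a + e - t' = t + mul (L.lev v) a - t" unfolding e_def by (simp add: algebra_simps)
    have n2: "\<not> inH (a - b) (t + mul (L.lev v) a + e - t')" unfolding eq by (rule n)
    obtain j where j: "v - (t + mul (L.lev v) a) = mul j (a - b)" using h unfolding inH_def by blast
    have ve: "v + e = (t + mul (L.lev v) a + e) + mul j (a - b)" using j by (simp add: algebra_simps)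
    show ?thesis unfolding ve by (rule Q2.CC[OF n2])
  qed
  define c where "c = card {v. L.lev v = 0}"
  define J1 where "J1 = card {i\<in>I. Q1.g (x i) = b}"
  define J2 where "J2 = card {i\<in>I. Q2.g (x i + e) = b}"
  have C1: "card {v. v \<noteq> t \<and> Q1.g v = b} =
     card {v. v \<noteq> t \<and> Q1.g v = b \<and> L.lev v = 0} + c * J1"
    using L.count_decomp[of "Q1.g", OF G1] unfolding c_def J1_def I_def x_def by simp
  have C2: "card {v. v \<noteq> t \<and> Q2.g (v + e) = b} =
     card {v. v \<noteq> t \<and> Q2.g (v + e) = b \<and> L.lev v = 0} + c * J2"
    using L.count_decomp[of "\<lambda>v. Q2.g (v + e)", OF G2] unfolding c_def J2_def I_def x_def by simp
  have K: "{v. v \<noteq> t \<and> Q2.g (v + e) = b \<and> L.lev v = 0} = {v. v \<noteq> t \<and> Q1.g v = b \<and> L.lev v = 0}"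
  proof (rule set_eqI)
    fix v
    show "v \<in> {v. v \<noteq> t \<and> Q2.g (v + e) = b \<and> L.lev v = 0} \<longleftrightarrow> v \<in> {v. v \<noteq> t \<and> Q1.g v = b \<and> L.lev v = 0}"
      using D0[of v] unfolding D_def by auto
  qed
  have B1: "Q1.Bs = {v. v \<noteq> t \<and> Q1.g v = b}" unfolding Q1.Bs_def ..
  have B2: "Q2.Bs = (\<lambda>v. v + e) ` {v. v \<noteq> t \<and> Q2.g (v + e) = b}"
  proof (rule set_eqI, rule iffI)
    fix w assume "w \<in> Q2.Bs"
    then have w: "w \<noteq> t'" "Q2.g w = b" unfolding Q2.Bs_def by auto
    have "w - e \<noteq> t" using w(1) unfolding e_def by auto
    moreover have "w - e + e = w" by simp
    ultimately show "w \<in> (\<lambda>v. v + e) ` {v. v \<noteq> t \<and> Q2.g (v + e) = b}"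
      using w(2) by (metis (mono_tags, lifting) image_eqI mem_Collect_eq)
  next
    fix w assume "w \<in> (\<lambda>v. v + e) ` {v. v \<noteq> t \<and> Q2.g (v + e) = b}"
    then obtain v where v: "w = v + e" "v \<noteq> t" "Q2.g (v + e) = b" by auto
    then have "w \<noteq> t'" using vt by simp
    then show "w \<in> Q2.Bs" unfolding Q2.Bs_def using v by simp
  qed
  have "card Q2.Bs = card {v. v \<noteq> t \<and> Q2.g (v + e) = b}"
    unfolding B2 by (rule card_image) (simp add: inj_on_def)
  then have "c * J1 = c * J2" using samecard C1 C2 K B1 by simp
  moreover have "0 < c" unfolding c_def using L.lev_t
    by (metis (mono_tags, lifting) card_gt_0_iff empty_iff finite mem_Collect_eq)
  ultimately have J: "J1 = J2" by simp
  have gform1: "Q1.g (x i) = a - (if Q1.g (x i) = b then a - b else 0)" if "i \<in> I" for i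
    using Q1.g_ab[OF xI(2)[OF that]] by auto
  have gform2: "Q2.g (x i + e) = a - (if Q2.g (x i + e) = b then a - b else 0)" if "i \<in> I" for i
    using Q2.g_ab[OF xI(3)[OF that]] by auto
  have Dli: "Dl i = (if Q1.g (x i) = b then a - b else 0) - (if Q2.g (x i + e) = b then a - b else 0)"
    if "i \<in> I" for i
  proof -
    have "Dl i = Q2.g (x i + e) - Q1.g (x i)" unfolding Dl_def D_def x_def ..
    also have "\<dots> = (a - (if Q2.g (x i + e) = b then a - b else 0)) - (a - (if Q1.g (x i) = b then a - b else 0))"
      using gform1[OF that] gform2[OF that] by simp
    finally show ?thesis by simp
  qed
  have S1: "(\<Sum>i\<in>I. if Q1.g (x i) = b then a - b else 0) = mul J1 (a - b)"
  proof -
    have "(\<Sum>i\<in>I. if Q1.g (x i) = b then a - b else 0) = (\<Sum>i\<in>{i\<in>I. Q1.g (x i) = b}. a - b)"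
      by (rule sum.inter_filter[symmetric]) (simp add: I_def)
    also have "\<dots> = mul J1 (a - b)" unfolding J1_def by (rule sum_const_mul) (simp add: I_def)
    finally show ?thesis .
  qed
  have S2: "(\<Sum>i\<in>I. if Q2.g (x i + e) = b then a - b else 0) = mul J2 (a - b)"
  proof -
    have "(\<Sum>i\<in>I. if Q2.g (x i + e) = b then a - b else 0) = (\<Sum>i\<in>{i\<in>I. Q2.g (x i + e) = b}. a - b)"
      by (rule sum.inter_filter[symmetric]) (simp add: I_def)
    also have "\<dots> = mul J2 (a - b)" unfolding J2_def by (rule sum_const_mul) (simp add: I_def)
    finally show ?thesis .
  qed
  have "(\<Sum>i\<in>I. Dl i) = (\<Sum>i\<in>I. (if Q1.g (x i) = b then a - b else 0) - (if Q2.g (x i + e) = b then a - b else 0))"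
    by (rule sum.cong) (simp_all add: Dli)
  also have "\<dots> = mul J1 (a - b) - mul J2 (a - b)" using S1 S2 by (simp add: sum_subtractf)
  also have "\<dots> = 0" using J by simp
  finally have SI: "(\<Sum>i\<in>I. Dl i) = 0" .
  have Dl0: "Dl 0 = 0" unfolding Dl_def using D0[of t] L.lev_t by simp
  have "{..<L.m} = insert 0 I" unfolding I_def using L.m_pos by auto
  then have "(\<Sum>i<L.m. Dl i) = Dl 0 + (\<Sum>i\<in>I. Dl i)" by (simp add: I_def)
  then show ?thesis using SI Dl0 by simp
qed

lemma f_step_H: "inH (a - b) (f v - (v + a))"
proof (cases "v = t")
  case True
  have "f v - (v + a) = s - a - t" using True Q1.ft by (simp add: algebra_simps)
  then show ?thesis using Q1.s_a_t by simp
next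
  case False
  then have "f v = v + a \<or> f v = v + b" using Q1.fstep by blast
  then show ?thesis
  proof
    assume "f v = v + a" then show ?thesis by simp
  next
    assume fv: "f v = v + b"
    have "f v - (v + a) = (v + b) - (v + a)" by (subst fv) (rule refl)
    also have "\<dots> = - (a - b)" by (simp add: algebra_simps)
    finally have eq: "f v - (v + a) = - (a - b)" .
    show ?thesis unfolding eq by (rule inH_neg[OF inH_self])
  qed
qed

lemma tau_step: "tau (f v) = tau v + D v"
proof -
  have l: "L.lev (f v) = Suc (L.lev v) mod L.m" using L.lev_step[OF f_step_H] .
  have D: "D v = Dl (L.lev v)" by (rule D_Dl)
  show ?thesis
  proof (cases "Suc (L.lev v) < L.m")
    case True
    then have "L.lev (f v) = Suc (L.lev v)" using l by simp
    then show ?thesis unfolding tau_def D by simp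
  next
    case False
    then have "Suc (L.lev v) = L.m" using L.lev_lt[of v] by simp
    then have "L.lev (f v) = 0" using l by simp
    then have "tau (f v) = 0" by (rule tau0)
    moreover have "tau v + D v = (\<Sum>i<Suc (L.lev v). Dl i)" unfolding tau_def D by simp
    ultimately show ?thesis using \<open>Suc (L.lev v) = L.m\<close> sumDl by simp
  qed
qed

definition phi where "phi v = v + e + tau v"

lemma g2_phi: "Q2.g (phi v) = Q2.g (v + e)"
proof (cases "L.lev v = 0")
  case True
  then show ?thesis unfolding phi_def using tau0 by simp
next
  case False
  then have n1: "\<not> inH (a - b) (v - t)" using L.lev0 by simp
  have n2: "\<not> inH (a - b) (v + e - t')" using n1 unfolding e_def by (simp add: algebra_simps)
  obtain j where j: "tau v = mul j (a - b)" using tau_H unfolding inH_def by blast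
  show ?thesis unfolding phi_def j using Q2.CC[OF n2, of j] .
qed

lemma phi_comm: "f' (phi v) = phi (f v)"
proof -
  have "f' (phi v) = phi v + Q2.g (phi v)" by (rule Q2.f_g)
  also have "\<dots> = phi v + Q2.g (v + e)" by (simp only: g2_phi)
  also have "\<dots> = v + e + tau v + Q2.g (v + e)" unfolding phi_def ..
  also have "Q2.g (v + e) = Q1.g v + D v" unfolding D_def by simp
  also have "f v = v + Q1.g v" by (rule Q1.f_g)
  then have "v + e + tau v + (Q1.g v + D v) = f v + e + (tau v + D v)" by (simp add: algebra_simps)
  also have "\<dots> = phi (f v)" unfolding phi_def tau_step ..
  finally show ?thesis .
qed

lemma phi_inj: "inj phi"
proof (rule injI)
  fix v w assume "phi v = phi w"
  then have vw: "v - w = tau w - tau v" unfolding phi_def by (simp add: algebra_simps)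
  have "inH (a - b) (v - w)" unfolding vw by (rule inH_diff[OF tau_H tau_H])
  then have "L.lev v = L.lev w" by (rule L.lev_same)
  then have "tau v = tau w" unfolding tau_def by simp
  then show "v = w" using vw by simp
qed

lemma orbit_map: "(f' ^^ n) (phi x) = phi ((f ^^ n) x)"
  by (induction n) (simp_all add: phi_comm)

lemma pair_orbit:
  assumes "\<forall>v. \<exists>n. (f ^^ n) s = v"
  shows "\<forall>w. \<exists>n. (f' ^^ n) (phi s) = w"
proof
  fix w
  have "surj phi" using finite_UNIV_inj_surj[OF finite_UNIV phi_inj] .
  then obtain v where v: "w = phi v" by (metis surjD)
  obtain n where "(f ^^ n) s = v" using assms by blast
  then show "\<exists>n. (f' ^^ n) (phi s) = w" using orbit_map v by metis
qed

end

lemma (in qpath) delta: "delta_b b {(v, f v) | v. v \<noteq> t} = card Bs"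
proof -
  have "{(v, w) \<in> {(v, f v) | v. v \<noteq> t}. w = v + b} = (\<lambda>v. (v, f v)) ` Bs"
  proof (rule set_eqI, rule iffI)
    fix x assume "x \<in> {(v, w) \<in> {(v, f v) | v. v \<noteq> t}. w = v + b}"
    then obtain v where v: "x = (v, f v)" "v \<noteq> t" "f v = v + b" by auto
    then have "g v = b" unfolding g_def by simp
    then show "x \<in> (\<lambda>v. (v, f v)) ` Bs" using v unfolding Bs_def by auto
  next
    fix x assume "x \<in> (\<lambda>v. (v, f v)) ` Bs"
    then obtain v where v: "x = (v, f v)" "v \<noteq> t" "g v = b" unfolding Bs_def by auto
    then have "f v = v + b" unfolding g_def by (simp add: algebra_simps)
    then show "x \<in> {(v, w) \<in> {(v, f v) | v. v \<noteq> t}. w = v + b}" using v by auto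
  qed
  moreover have "inj_on (\<lambda>v. (v, f v)) Bs" by (simp add: inj_on_def)
  ultimately show ?thesis unfolding delta_b_def by (simp add: card_image)
qed

lemma qp_of:
  assumes ab: "a \<noteq> b" and dp: "is_dipath a b p" and dc: "\<forall>c\<in>C. is_dicycle a b c"
    and disj1: "\<forall>c\<in>C. set c \<inter> set p = {}"
    and disj2: "\<forall>c\<in>C. \<forall>c'\<in>C. c \<noteq> c' \<longrightarrow> set c \<inter> set c' = {}"
    and cov: "set p \<union> (\<Union>c\<in>C. set c) = UNIV"
    and PP: "P = path_arcs p \<union> (\<Union>c\<in>C. cycle_arcs c)"
  shows "\<exists>f. qpath a b (last p) (hd p) f \<and> P = {(v, f v) | v. v \<noteq> last p}
            \<and> (\<forall>v. v \<in> set p \<longleftrightarrow> f v \<in> set p)"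
proof -
  have p: "distinct p" "p \<noteq> []" using dp unfolding is_dipath_def by auto
  have cyc: "\<forall>c\<in>C. c \<noteq> [] \<and> distinct c" using dc unfolding is_dicycle_def by auto
  have Pc: "P \<subseteq> cay_arcs a b" using dp dc unfolding PP is_dipath_def is_dicycle_def by auto
  obtain f where f: "inj f" "f (last p) = hd p" "P = {(v, f v) | v. v \<noteq> last p}"
     "\<forall>v. v \<in> set p \<longleftrightarrow> f v \<in> set p"
    using sqp_struct[OF p cyc disj1 disj2 cov PP] by blast
  have "f v = v + a \<or> f v = v + b" if "v \<noteq> last p" for v
  proof -
    have "(v, f v) \<in> P" using f(3) that by auto
    then show ?thesis using Pc unfolding cay_arcs_def by auto
  qed
  then have "qpath a b (last p) (hd p) f" using ab f(1,2) by unfold_locales auto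
  then show ?thesis using f by blast
qed

theorem mainTheorem18:
  fixes a b :: "'g::{ab_group_add, finite}"
    and P P' :: "('g \<times> 'g) set"
  assumes "a \<noteq> b"
    and "generates {a, b}"
    and "spanning_quasi_path a b P"
    and "spanning_quasi_path a b P'"
    and "delta_b b P = delta_b b P'"
    and "hamiltonian_path a b P"
  shows "hamiltonian_path a b P'"
proof -
  note ab = assms(1)
  obtain p0 where p0: "is_dipath a b p0" "set p0 = UNIV" "P = path_arcs p0"
    using assms(6) unfolding hamiltonian_path_def by blast
  obtain f where f: "qpath a b (last p0) (hd p0) f" "P = {(v, f v) | v. v \<noteq> last p0}"
    using qp_of[OF ab p0(1), of "{}" P] p0 by auto
  obtain p' C' where pc: "is_dipath a b p'" "\<forall>c\<in>C'. is_dicycle a b c"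
        "\<forall>c\<in>C'. set c \<inter> set p' = {}"
        "\<forall>c\<in>C'. \<forall>c'\<in>C'. c \<noteq> c' \<longrightarrow> set c \<inter> set c' = {}"
        "set p' \<union> (\<Union>c\<in>C'. set c) = UNIV"
        "P' = path_arcs p' \<union> (\<Union>c\<in>C'. cycle_arcs c)"
    using assms(4) unfolding spanning_quasi_path_def by blast
  obtain f' where f': "qpath a b (last p') (hd p') f'" "P' = {(v, f' v) | v. v \<noteq> last p'}"
      "\<forall>v. v \<in> set p' \<longleftrightarrow> f' v \<in> set p'"
    using qp_of[OF ab pc] by blast
  have orb: "\<forall>v. \<exists>n. (f ^^ n) (hd p0) = v"
  proof
    fix v
    have d0: "distinct p0" "p0 \<noteq> []" using p0(1) unfolding is_dipath_def by auto
    have it: "(f ^^ i) (hd p0) = p0 ! i" if "i < length p0" for i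
      using that
    proof (induction i)
      case 0 then show ?case using d0 by (simp add: hd_conv_nth)
    next
      case (Suc i)
      have "(p0 ! i, p0 ! Suc i) \<in> path_arcs p0" unfolding path_arcs_iff using Suc.prems by blast
      then have "(p0 ! i, p0 ! Suc i) \<in> {(v, f v) | v. v \<noteq> last p0}" using p0(3) f(2) by simp
      then have "p0 ! Suc i = f (p0 ! i)" by auto
      then show ?case using Suc by simp
    qed
    have "v \<in> set p0" using p0(2) by simp
    then obtain i where "i < length p0" "p0 ! i = v" by (auto simp: in_set_conv_nth)
    then show "\<exists>n. (f ^^ n) (hd p0) = v" using it by metis
  qed
  have cards: "card (qpath.Bs b (last p0) f) = card (qpath.Bs b (last p') f')"
    using assms(5) qpath.delta[OF f(1)] qpath.delta[OF f'(1)] f(2) f'(2) by simp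
  have lv: "levels a b" using assms(2) by unfold_locales
  interpret PR: pair a b "last p0" "hd p0" f "last p'" "hd p'" f'
    using f(1) f'(1) lv cards by (simp add: pair_def pair_axioms_def)
  have all: "\<forall>w. \<exists>n. (f' ^^ n) (PR.phi (hd p0)) = w" using PR.pair_orbit[OF orb] .
  define x where "x = PR.phi (hd p0)"
  have closed: "(f' ^^ n) x \<in> set p' \<longleftrightarrow> x \<in> set p'" for n
    by (induction n) (use f'(3) in auto)
  have hp: "hd p' \<in> set p'" using pc(1) unfolding is_dipath_def by simp
  have xin: "x \<in> set p'"
  proof -
    obtain n where "(f' ^^ n) x = hd p'" using all unfolding x_def by blast
    then show ?thesis using closed[of n] hp by simp
  qed
  have sp: "set p' = UNIV"
  proof (rule set_eqI)
    fix w
    obtain n where "(f' ^^ n) x = w" using all unfolding x_def by blast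
    then show "w \<in> set p' \<longleftrightarrow> w \<in> UNIV" using closed[of n] xin by simp
  qed
  have "C' = {}"
  proof (rule ccontr)
    assume "C' \<noteq> {}"
    then obtain c where c: "c \<in> C'" by blast
    then have "c \<noteq> []" using pc(2) unfolding is_dicycle_def by auto
    then have "set c \<noteq> {}" by simp
    then show False using pc(3) c sp by auto
  qed
  then have "P' = path_arcs p'" using pc(6) by simp
  then show ?thesis unfolding hamiltonian_path_def using pc(1) sp by blast
qed

end
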